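(* Let $r\ge 1$, let $M=(v_1,\dots,v_n)$ be a finite list of nonzero vectors generating $\mathbb{F}_2^r$, let $G=G(\mathbb{F}_2^r,M)$, and let $\lambda_u=n-\sum_{i=1}^n(-1)^{u\cdot v_i}$ for $u\in\mathbb{F}_2^r$. For $1\le j\le r$, the additive order of the class of $x_j-1$ in $$R(G)=\mathbb{Z}[x_1,\dots,x_r]\Big/\Big(x_1^2-1,\dots,x_r^2-1,\ n-\sum_{i=1}^n\prod_{k=1}^r x_k^{(v_i)_k}\Big)$$ equals the minimum positive integer $C$ such that for every $v\in\mathbb{F}_2^r$, $$\frac{C}{2^{r-2}}\sum_{\substack{u\in\mathbb{F}_2^r:\ u\cdot v=1,\ u_j=1}}\frac{1}{\lambda_u}\in\mathbb{Z}.$$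
   Context: The Cayley graph $G$ has vertex set $\mathbb{F}_2^r$ and Laplacian $L(G)$ indexed by $\mathbb{F}_2^r$ with $L(G)_{u,u}=n$ and $L(G)_{u,w}=-\#\{i:u+v_i=w\}$ for $u\ne w$. The $\lambda_u$ are the eigenvalues of $L(G)$, and $\lambda_u>0$ for $u\neq 0$. As abelian groups, $R(G)\cong\operatorname{coker}L(G)$ via identifying the monomial $\prod_k x_k^{w_k}$ ($w\in\mathbb{F}_2^r$) with the standard basis vector $e_w\in\mathbb{Z}^{2^r}$; the class of $x_j-1$ has finite additive order. *)

theory Defs
  imports Complex_Main
begin

text \<open>Vectors of F_2^r are modelled as boolean lists of length r (True = 1).
  Coordinate k (1-based, as in the paper) is list position k-1.\<close>

definition vecs :: "nat \<Rightarrow> bool list set" where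
  "vecs r = {u. length u = r}"

definition zerov :: "nat \<Rightarrow> bool list" where
  "zerov r = replicate r False"

definition vadd :: "bool list \<Rightarrow> bool list \<Rightarrow> bool list" where
  "vadd u v = map2 (\<noteq>) u v"

definition dot :: "bool list \<Rightarrow> bool list \<Rightarrow> bool" where
  "dot u v = odd (card {i. i < length u \<and> u ! i \<and> v ! i})"

inductive_set f2span :: "nat \<Rightarrow> bool list list \<Rightarrow> bool list set" for r M where
  zero: "zerov r \<in> f2span r M"
| step: "x \<in> f2span r M \<Longrightarrow> v \<in> set M \<Longrightarrow> vadd v x \<in> f2span r M"

definition lam :: "bool list list \<Rightarrow> bool list \<Rightarrow> real" where
  "lam M u = real (length M) - (\<Sum>i<length M. if dot u (M ! i) then -1 else 1)"

text \<open>The ring Z[x_1..x_r]/(x_1^2-1,...,x_r^2-1) is the group ring Z[F_2^r]: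
  the monomial prod_k x_k^(w_k) corresponds to the basis element delta_w.
  Elements are functions bool list => int (only values on vecs r matter).\<close>

definition delta :: "bool list \<Rightarrow> bool list \<Rightarrow> int" where
  "delta a w = (if w = a then 1 else 0)"

definition gr_mult :: "nat \<Rightarrow> (bool list \<Rightarrow> int) \<Rightarrow> (bool list \<Rightarrow> int) \<Rightarrow> bool list \<Rightarrow> int" where
  "gr_mult r f g w = (\<Sum>u\<in>vecs r. f u * g (vadd w u))"

definition relel :: "nat \<Rightarrow> bool list list \<Rightarrow> bool list \<Rightarrow> int" where
  "relel r M w = int (length M) * delta (zerov r) w - (\<Sum>i<length M. delta (M ! i) w)"

definition in_RG_ideal :: "nat \<Rightarrow> bool list list \<Rightarrow> (bool list \<Rightarrow> int) \<Rightarrow> bool" where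
  "in_RG_ideal r M a \<longleftrightarrow> (\<exists>f. \<forall>w\<in>vecs r. a w = gr_mult r f (relel r M) w)"

definition RG_add_order :: "nat \<Rightarrow> bool list list \<Rightarrow> (bool list \<Rightarrow> int) \<Rightarrow> nat" where
  "RG_add_order r M a = (LEAST C::nat. C > 0 \<and> in_RG_ideal r M (\<lambda>w. int C * a w))"

definition unitv :: "nat \<Rightarrow> nat \<Rightarrow> bool list" where
  "unitv r j = map (\<lambda>i. i = j - 1) [0..<r]"

definition xj_minus_1 :: "nat \<Rightarrow> nat \<Rightarrow> bool list \<Rightarrow> int" where
  "xj_minus_1 r j w = delta (unitv r j) w - delta (zerov r) w"

definition integral_cond :: "nat \<Rightarrow> bool list list \<Rightarrow> nat \<Rightarrow> nat \<Rightarrow> bool" where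
  "integral_cond r M j C \<longleftrightarrow>
     (\<forall>v\<in>vecs r. real C / 2 powr (real r - 2) *
        (\<Sum>u\<in>{u\<in>vecs r. dot u v \<and> u ! (j - 1)}. 1 / lam M u) \<in> \<int>)"

end

theory Submission imports Defs begin

lemma vecs_alt: "vecs r = {xs. set xs \<subseteq> UNIV \<and> length xs = r}"
  by (simp add: vecs_def)

lemma finite_vecs[simp]: "finite (vecs r)"
  unfolding vecs_alt by (rule finite_lists_length_eq) simp

lemma card_vecs: "card (vecs r) = 2 ^ r"
  using card_lists_length_eq[of "UNIV::bool set" r] unfolding vecs_alt by simp

lemma len_vadd[simp]: "length (vadd u v) = min (length u) (length v)"
  by (simp add: vadd_def)

lemma nth_vadd: "i < length u \<Longrightarrow> i < length v \<Longrightarrow> vadd u v ! i = (u ! i \<noteq> v ! i)"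
  by (simp add: vadd_def)

lemma vadd_in: "u \<in> vecs r \<Longrightarrow> v \<in> vecs r \<Longrightarrow> vadd u v \<in> vecs r"
  by (simp add: vecs_def)

lemma vadd_comm: "length u = length v \<Longrightarrow> vadd u v = vadd v u"
  by (rule nth_equalityI) (auto simp: nth_vadd)

lemma vadd_assoc: "length u = length v \<Longrightarrow> length v = length w \<Longrightarrow>
  vadd (vadd u v) w = vadd u (vadd v w)"
  by (rule nth_equalityI) (auto simp: nth_vadd)

lemma vadd_zero_left: "length u = r \<Longrightarrow> vadd (zerov r) u = u"
  by (rule nth_equalityI) (auto simp: nth_vadd zerov_def)

lemma vadd_zero_right: "length u = r \<Longrightarrow> vadd u (zerov r) = u"
  by (rule nth_equalityI) (auto simp: nth_vadd zerov_def)

lemma vadd_self: "vadd u u = zerov (length u)"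
  by (rule nth_equalityI) (auto simp: nth_vadd zerov_def)

lemma vadd_cancel: "u \<in> vecs r \<Longrightarrow> w \<in> vecs r \<Longrightarrow> vadd w (vadd w u) = u"
  by (simp add: vecs_def vadd_assoc[symmetric] vadd_self vadd_zero_left)

lemma vadd_eq_iff: "u \<in> vecs r \<Longrightarrow> w \<in> vecs r \<Longrightarrow> x \<in> vecs r \<Longrightarrow>
  (vadd w u = x) = (u = vadd w x)"
  using vadd_cancel by metis

lemma zerov_in[simp]: "zerov r \<in> vecs r"
  by (simp add: zerov_def vecs_def)

lemma unitv_in: "unitv r j \<in> vecs r"
  by (simp add: unitv_def vecs_def)

lemma card_Suc_split: "card {i. i < Suc n \<and> P i} = card {i. i < n \<and> P i} + (if P n then 1 else 0)"
proof (cases "P n")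
  case True
  have "{i. i < Suc n \<and> P i} = insert n {i. i < n \<and> P i}" using True by auto
  then show ?thesis using True by simp
next
  case False
  have "{i. i < Suc n \<and> P i} = {i. i < n \<and> P i}" using False less_Suc_eq by auto
  then show ?thesis using False by simp
qed

lemma odd_card_xor: "odd (card {i. i < (n::nat) \<and> (P i \<noteq> Q i)}) =
   (odd (card {i. i < n \<and> P i}) \<noteq> odd (card {i. i < n \<and> Q i}))"
  by (induction n) (auto simp: card_Suc_split)

lemma dot_vadd: "length u = r \<Longrightarrow> length v = r \<Longrightarrow> length w = r \<Longrightarrow>
   dot u (vadd v w) = (dot u v \<noteq> dot u w)"
proof -
  assume a: "length u = r" "length v = r" "length w = r"
  have "{i. i < length u \<and> u ! i \<and> vadd v w ! i} = {i. i < r \<and> ((u!i \<and> v!i) \<noteq> (u!i \<and> w!i))}"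
    using a by (auto simp: nth_vadd)
  then show ?thesis using a odd_card_xor[of r "\<lambda>i. u!i \<and> v!i" "\<lambda>i. u!i \<and> w!i"]
    unfolding dot_def by simp
qed

lemma dot_comm: "length u = length v \<Longrightarrow> dot u v = dot v u"
  unfolding dot_def by (metis (no_types, lifting) Collect_cong)

lemma dot_zero[simp]: "length u = r \<Longrightarrow> dot u (zerov r) = False"
proof -
  assume "length u = r"
  then have h: "{i. i < length u \<and> u ! i \<and> zerov r ! i} = {}" by (auto simp: zerov_def)
  show ?thesis unfolding dot_def h by simp
qed

lemma dot_unit: "length u = r \<Longrightarrow> 1 \<le> j \<Longrightarrow> j \<le> r \<Longrightarrow> dot u (unitv r j) = u ! (j - 1)"
proof -
  assume a: "length u = r" "1 \<le> j" "j \<le> r"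
  have "{i. i < length u \<and> u ! i \<and> unitv r j ! i} = (if u ! (j-1) then {j-1} else {})"
    using a by (auto simp: unitv_def)
  then show ?thesis unfolding dot_def by simp
qed

definition chi :: "bool list \<Rightarrow> bool list \<Rightarrow> real" where
  "chi u w = (if dot u w then -1 else 1)"

lemma chi_vadd: "length u = r \<Longrightarrow> length v = r \<Longrightarrow> length w = r \<Longrightarrow>
   chi u (vadd v w) = chi u v * chi u w"
  by (simp add: chi_def dot_vadd)

lemma orth: assumes "w \<in> vecs r"
  shows "(\<Sum>u\<in>vecs r. chi u w) = (if w = zerov r then 2 ^ r else 0)"
proof (cases "w = zerov r")
  case True
  have "(\<Sum>u\<in>vecs r. chi u w) = (\<Sum>u\<in>vecs r. 1)"
    using True by (intro sum.cong) (auto simp: chi_def vecs_def)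
  then show ?thesis using True by (simp add: card_vecs)
next
  case False
  have lw: "length w = r" using assms by (simp add: vecs_def)
  obtain i where i: "i < r" "w ! i"
  proof -
    have "\<exists>i<r. w ! i"
    proof (rule ccontr)
      assume "\<not> ?thesis"
      then have "w = zerov r" using lw by (intro nth_equalityI) (auto simp: zerov_def)
      then show False using False by simp
    qed
    then show ?thesis using that by blast
  qed
  define e where "e = unitv r (Suc i)"
  have e: "e \<in> vecs r" unfolding e_def by (rule unitv_in)
  have de: "dot w e = True" using i lw unfolding e_def by (simp add: dot_unit)
  have neg: "chi (vadd e a) w = - chi a w" if a: "a \<in> vecs r" for a
  proof -
    have "dot (vadd e a) w = dot w (vadd e a)" using a e lw by (intro dot_comm) (simp add: vecs_def)
    also have "\<dots> = (\<not> dot w a)" using a e lw de by (simp add: dot_vadd vecs_def)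
    also have "\<dots> = (\<not> dot a w)" using a lw dot_comm by (metis mem_Collect_eq vecs_def)
    finally show "chi (vadd e a) w = - chi a w" by (simp add: chi_def)
  qed
  have vv: "\<And>a. a \<in> vecs r \<Longrightarrow> vadd e (vadd e a) = a" "\<And>a. a \<in> vecs r \<Longrightarrow> vadd e a \<in> vecs r"
    using e vadd_cancel vadd_in by auto
  have "(\<Sum>u\<in>vecs r. - chi u w) = (\<Sum>u\<in>vecs r. chi u w)"
    by (rule sum.reindex_bij_witness[where i="vadd e" and j="vadd e"]) (auto simp: vv neg)
  then have "(\<Sum>u\<in>vecs r. chi u w) = 0" by (simp add: sum_negf)
  then show ?thesis using False by simp
qed


definition Lr :: "bool list list \<Rightarrow> (bool list \<Rightarrow> real) \<Rightarrow> bool list \<Rightarrow> real" where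
  "Lr M g w = real (length M) * g w - (\<Sum>i<length M. g (vadd w (M ! i)))"

lemma sum_delta_vecs: "a \<in> vecs r \<Longrightarrow> (\<Sum>u\<in>vecs r. f u * delta a u) = f a"
proof -
  assume a: "a \<in> vecs r"
  have "\<And>u. f u * delta a u = (if u = a then f a else 0)" by (simp add: delta_def)
  then show ?thesis using a by simp
qed

lemma gr_mult_eq:
  assumes M: "\<forall>v\<in>set M. v \<in> vecs r" and w: "w \<in> vecs r"
  shows "gr_mult r f (relel r M) w = int (length M) * f w - (\<Sum>i<length M. f (vadd w (M ! i)))"
proof -
  have Mi: "\<And>i. i < length M \<Longrightarrow> M ! i \<in> vecs r" using M by simp
  have dsh: "delta x (vadd w u) = delta (vadd w x) u" if "u \<in> vecs r" "x \<in> vecs r" for u x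
    using vadd_eq_iff[OF that(1) w that(2)] by (simp add: delta_def)
  have "gr_mult r f (relel r M) w =
     (\<Sum>u\<in>vecs r. int (length M) * (f u * delta w u) - (\<Sum>i<length M. f u * delta (vadd w (M ! i)) u))"
    unfolding gr_mult_def relel_def
  proof (rule sum.cong[OF refl])
    fix u assume u: "u \<in> vecs r"
    have "vadd w (zerov r) = w" using w by (simp add: vadd_zero_right vecs_def)
    then show "f u * (int (length M) * delta (zerov r) (vadd w u) - (\<Sum>i<length M. delta (M ! i) (vadd w u))) =
      int (length M) * (f u * delta w u) - (\<Sum>i<length M. f u * delta (vadd w (M ! i)) u)"
      using dsh[OF u] Mi by (simp add: algebra_simps sum_distrib_left)
  qed
  also have "\<dots> = int (length M) * (\<Sum>u\<in>vecs r. f u * delta w u) -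
      (\<Sum>i<length M. \<Sum>u\<in>vecs r. f u * delta (vadd w (M ! i)) u)"
    by (simp add: sum_subtractf sum_distrib_left sum.swap[of _ "vecs r"])
  also have "\<dots> = int (length M) * f w - (\<Sum>i<length M. f (vadd w (M ! i)))"
    using sum_delta_vecs w Mi vadd_in by simp
  finally show ?thesis .
qed

lemma lam_chi: "lam M u = real (length M) - (\<Sum>i<length M. chi u (M ! i))"
  by (simp add: lam_def chi_def)

lemma lam_Ints: "lam M u \<in> \<int>"
  unfolding lam_def by (intro Ints_diff Ints_sum) auto

lemma span_vecs: "x \<in> f2span r M \<Longrightarrow> \<forall>v\<in>set M. v \<in> vecs r \<Longrightarrow> x \<in> vecs r"
  by (induction rule: f2span.induct) (auto intro: vadd_in)

lemma lam_pos:
  assumes M: "\<forall>v\<in>set M. v \<in> vecs r" and sp: "f2span r M = vecs r"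
    and u: "u \<in> vecs r" "u \<noteq> zerov r"
  shows "lam M u > 0"
proof -
  have lu: "length u = r" using u by (simp add: vecs_def)
  have "\<exists>i<length M. dot u (M ! i)"
  proof (rule ccontr)
    assume "\<not> ?thesis"
    then have nd: "\<forall>v\<in>set M. \<not> dot u v" by (metis in_set_conv_nth)
    have "\<not> dot u x" if "x \<in> f2span r M" for x
      using that
    proof (induction rule: f2span.induct)
      case zero then show ?case using lu by simp
    next
      case (step x v)
      have "x \<in> vecs r" using step.hyps(1) M span_vecs by blast
      then show ?case using step nd M lu by (simp add: dot_vadd vecs_def)
    qed
    moreover obtain i where i: "i < r" "u ! i"
    proof -
      have "\<exists>i<r. u ! i"
      proof (rule ccontr)
        assume "\<not> ?thesis"
        then have "u = zerov r" using lu by (intro nth_equalityI) (auto simp: zerov_def)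
        then show False using u by simp
      qed
      then show ?thesis using that by blast
    qed
    moreover have "unitv r (Suc i) \<in> f2span r M" using sp unitv_in by blast
    ultimately show False using lu dot_unit[of u r "Suc i"] by auto
  qed
  then obtain i where i: "i < length M" "dot u (M ! i)" by blast
  have "lam M u = (\<Sum>k<length M. 1 - chi u (M ! k))"
    by (simp add: lam_chi sum_subtractf)
  also have "\<dots> \<ge> 1 - chi u (M ! i)"
    by (rule member_le_sum) (use i in \<open>auto simp: chi_def\<close>)
  finally show ?thesis using i by (simp add: chi_def)
qed

lemma harmonic:
  assumes M: "\<forall>v\<in>set M. v \<in> vecs r" and sp: "f2span r M = vecs r"
    and L: "\<forall>w\<in>vecs r. Lr M h w = 0"
  shows "\<forall>w\<in>vecs r. h w = h (zerov r)"
proof -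
  define m where "m = Max (h ` vecs r)"
  have ne: "vecs r \<noteq> {}" using zerov_in by blast
  have "m \<in> h ` vecs r" unfolding m_def using ne by (intro Max_in) auto
  then obtain w0 where w0: "w0 \<in> vecs r" "h w0 = m" by auto
  have le: "\<And>w. w \<in> vecs r \<Longrightarrow> h w \<le> m" unfolding m_def by simp
  have lenv: "\<And>x. x \<in> vecs r \<Longrightarrow> length x = r" by (simp add: vecs_def)
  have claim: "h (vadd x w0) = m" if "x \<in> f2span r M" for x
    using that
  proof (induction rule: f2span.induct)
    case zero then show ?case using w0 by (simp add: vadd_zero_left vecs_def)
  next
    case (step x v)
    have x: "x \<in> vecs r" using step.hyps(1) M span_vecs by blast
    define y where "y = vadd x w0"
    have y: "y \<in> vecs r" using x w0 vadd_in y_def by blast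
    have hy: "h y = m" using step.IH y_def by simp
    have Mi: "\<And>i. i < length M \<Longrightarrow> M ! i \<in> vecs r" using M by simp
    have "real (length M) * m - (\<Sum>i<length M. h (vadd y (M ! i))) = 0"
      using L y hy unfolding Lr_def by (metis (no_types, lifting))
    then have "(\<Sum>i<length M. m - h (vadd y (M ! i))) = 0"
      by (simp add: sum_subtractf)
    moreover have "\<forall>i\<in>{..<length M}. 0 \<le> m - h (vadd y (M ! i))"
      using le vadd_in y Mi by auto
    ultimately have eq: "\<forall>i\<in>{..<length M}. m - h (vadd y (M ! i)) = 0"
      using sum_nonneg_eq_0_iff[of "{..<length M}" "\<lambda>i. m - h (vadd y (M ! i))"] by simp
    obtain i where i: "i < length M" "v = M ! i" using step.hyps(2) by (metis in_set_conv_nth)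
    have v: "v \<in> vecs r" using i Mi by simp
    have "vadd (vadd v x) w0 = vadd y v"
      using x v w0 lenv y_def vadd_assoc vadd_comm by (metis len_vadd min.idem)
    then show ?case using eq i by simp
  qed
  have "h w = m" if w: "w \<in> vecs r" for w
  proof -
    have "vadd w w0 \<in> f2span r M" using sp vadd_in w w0 by blast
    then have "h (vadd (vadd w w0) w0) = m" by (rule claim)
    moreover have "vadd (vadd w w0) w0 = w"
      using w w0 lenv by (simp add: vadd_assoc vadd_self vadd_zero_right)
    ultimately show ?thesis by simp
  qed
  then show ?thesis using zerov_in by simp
qed


definition Sf :: "nat \<Rightarrow> bool list list \<Rightarrow> nat \<Rightarrow> bool list \<Rightarrow> real" where
  "Sf r M j v = (\<Sum>u\<in>{u\<in>vecs r. dot u v \<and> u ! (j - 1)}. 1 / lam M u)"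

lemma Sf_alt: "Sf r M j v = (\<Sum>u\<in>{u\<in>vecs r. u ! (j - 1)}. (1 - chi u v) / (2 * lam M u))"
proof -
  have h: "{u\<in>vecs r. dot u v \<and> u ! (j - 1)} = {u\<in>{u\<in>vecs r. u ! (j - 1)}. dot u v}" by auto
  have "Sf r M j v = (\<Sum>u\<in>{u\<in>vecs r. u ! (j - 1)}. if dot u v then 1 / lam M u else 0)"
    unfolding Sf_def h by (rule sum.inter_filter) simp
  also have "\<dots> = (\<Sum>u\<in>{u\<in>vecs r. u ! (j - 1)}. (1 - chi u v) / (2 * lam M u))"
    by (rule sum.cong) (auto simp: chi_def)
  finally show ?thesis .
qed

lemma Sf_zero: "Sf r M j (zerov r) = 0"
proof -
  have h: "{u\<in>vecs r. dot u (zerov r) \<and> u ! (j - 1)} = {}" by (auto simp: vecs_def)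
  show ?thesis unfolding Sf_def h by simp
qed

lemma aux: assumes "(L::real) > 0" "L = n - s"
  shows "n * ((1 - c) / (2 * L)) - (n - c * s) / (2 * L) = -(1/2) * c"
proof -
  have n: "n = L + s" using assms by simp
  show ?thesis using assms(1) unfolding n by (simp add: field_simps)
qed

lemma LSf:
  assumes M: "\<forall>v\<in>set M. v \<in> vecs r" and sp: "f2span r M = vecs r"
    and w: "w \<in> vecs r" and j: "1 \<le> j" "j \<le> r"
  shows "Lr M (Sf r M j) w = -(1/2) * (\<Sum>u\<in>{u\<in>vecs r. u ! (j - 1)}. chi u w)"
proof -
  define U where "U = {u\<in>vecs r. u ! (j - 1)}"
  define n where "n = length M"
  have Mi: "\<And>i. i < length M \<Longrightarrow> M ! i \<in> vecs r" using M by simp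
  have lenv: "\<And>x. x \<in> vecs r \<Longrightarrow> length x = r" by (simp add: vecs_def)
  have "Lr M (Sf r M j) w = real n * (\<Sum>u\<in>U. (1 - chi u w) / (2 * lam M u))
      - (\<Sum>i<n. \<Sum>u\<in>U. (1 - chi u w * chi u (M ! i)) / (2 * lam M u))"
    unfolding Lr_def Sf_alt U_def n_def
  proof -
    have "\<And>i u. i < length M \<Longrightarrow> u \<in> vecs r \<Longrightarrow> chi u (vadd w (M ! i)) = chi u w * chi u (M ! i)"
      using chi_vadd Mi w lenv by blast
    then show "real (length M) * (\<Sum>u\<in>{u \<in> vecs r. u ! (j - 1)}. (1 - chi u w) / (2 * lam M u)) -
    (\<Sum>i<length M. \<Sum>u\<in>{u \<in> vecs r. u ! (j - 1)}. (1 - chi u (vadd w (M ! i))) / (2 * lam M u)) =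
    real (length M) * (\<Sum>u\<in>{u \<in> vecs r. u ! (j - 1)}. (1 - chi u w) / (2 * lam M u)) -
    (\<Sum>i<length M. \<Sum>u\<in>{u \<in> vecs r. u ! (j - 1)}. (1 - chi u w * chi u (M ! i)) / (2 * lam M u))"
      by (intro arg_cong2[where f="(-)"] refl sum.cong) auto
  qed
  also have "\<dots> = (\<Sum>u\<in>U. real n * ((1 - chi u w) / (2 * lam M u))
      - (\<Sum>i<n. (1 - chi u w * chi u (M ! i)) / (2 * lam M u)))"
    by (simp add: sum_subtractf sum_distrib_left sum.swap[of _ "{..<n}"])
  also have "\<dots> = (\<Sum>u\<in>U. -(1/2) * chi u w)"
  proof (rule sum.cong[OF refl])
    fix u assume u: "u \<in> U"
    have "u \<noteq> zerov r" using u j unfolding U_def zerov_def by auto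
    then have lp: "lam M u > 0" using lam_pos[OF M sp] u unfolding U_def by blast
    have l: "lam M u = real n - (\<Sum>i<n. chi u (M ! i))" unfolding n_def by (rule lam_chi)
    have "(\<Sum>i<n. (1 - chi u w * chi u (M ! i)) / (2 * lam M u))
        = (real n - chi u w * (\<Sum>i<n. chi u (M ! i))) / (2 * lam M u)"
      by (simp add: sum_divide_distrib[symmetric] sum_subtractf sum_distrib_left)
    then show "real n * ((1 - chi u w) / (2 * lam M u))
      - (\<Sum>i<n. (1 - chi u w * chi u (M ! i)) / (2 * lam M u)) = -(1/2) * chi u w"
      using aux[OF lp l] by simp
  qed
  also have "\<dots> = -(1/2) * (\<Sum>u\<in>U. chi u w)" by (simp add: sum_distrib_left)
  finally show ?thesis unfolding U_def .
qed

lemma sumU_chi: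
  assumes w: "w \<in> vecs r" and j: "1 \<le> j" "j \<le> r"
  shows "(\<Sum>u\<in>{u\<in>vecs r. u ! (j - 1)}. chi u w) =
     2 ^ r / 2 * ((if w = zerov r then 1 else 0) - (if w = unitv r j then 1 else 0))"
proof -
  define e where "e = unitv r j"
  have e: "e \<in> vecs r" unfolding e_def by (rule unitv_in)
  have lenv: "\<And>x. x \<in> vecs r \<Longrightarrow> length x = r" by (simp add: vecs_def)
  have "(\<Sum>u\<in>{u\<in>vecs r. u ! (j - 1)}. chi u w) = (\<Sum>u\<in>vecs r. if u ! (j - 1) then chi u w else 0)"
    by (simp add: sum.inter_filter)
  also have "\<dots> = (\<Sum>u\<in>vecs r. (chi u w - chi u (vadd e w)) / 2)"
  proof (rule sum.cong[OF refl])
    fix u assume u: "u \<in> vecs r"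
    have "chi u (vadd e w) = chi u e * chi u w" using chi_vadd u e w lenv by blast
    moreover have "chi u e = (if u ! (j - 1) then -1 else 1)"
      using dot_unit[of u r j] u j lenv unfolding e_def chi_def by simp
    ultimately show "(if u ! (j - 1) then chi u w else 0) = (chi u w - chi u (vadd e w)) / 2" by simp
  qed
  also have "\<dots> = ((\<Sum>u\<in>vecs r. chi u w) - (\<Sum>u\<in>vecs r. chi u (vadd e w))) / 2"
    by (simp add: sum_divide_distrib[symmetric] sum_subtractf)
  also have "\<dots> = ((if w = zerov r then 2 ^ r else 0) - (if vadd e w = zerov r then 2 ^ r else 0)) / 2"
    using orth w e vadd_in by simp
  also have "(vadd e w = zerov r) = (w = e)"
    using vadd_eq_iff[OF w e zerov_in] e lenv vadd_zero_right by metis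
  finally show ?thesis unfolding e_def by simp
qed

lemma powr_r2: "(2::real) powr (real r - 2) = 2 ^ r / 4"
  by (simp add: powr_diff powr_realpow)

lemma g_eq:
  assumes M: "\<forall>v\<in>set M. v \<in> vecs r" and sp: "f2span r M = vecs r"
    and w: "w \<in> vecs r" and j: "1 \<le> j" "j \<le> r"
  shows "Lr M (\<lambda>v. real C / 2 powr (real r - 2) * Sf r M j v) w =
     real C * (delta (unitv r j) w - delta (zerov r) w)"
proof -
  have "Lr M (\<lambda>v. real C / 2 powr (real r - 2) * Sf r M j v) w =
     real C / 2 powr (real r - 2) * Lr M (Sf r M j) w"
    unfolding Lr_def by (simp add: sum_distrib_left algebra_simps)
  also have "\<dots> = real C * (delta (unitv r j) w - delta (zerov r) w)"
    unfolding LSf[OF assms] sumU_chi[OF w j] powr_r2 by (simp add: delta_def)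
  finally show ?thesis .
qed


lemma Lr_diff: "Lr M (\<lambda>v. p v - q v) w = Lr M p w - Lr M q w"
  unfolding Lr_def by (simp add: sum_subtractf algebra_simps)

lemma Ints_floor: "x \<in> \<int> \<Longrightarrow> of_int \<lfloor>x\<rfloor> = (x::real)"
  by (metis Ints_cases floor_of_int)

lemma equiv:
  assumes M: "\<forall>v\<in>set M. v \<in> vecs r" and sp: "f2span r M = vecs r"
    and j: "1 \<le> j" "j \<le> r"
  shows "in_RG_ideal r M (\<lambda>w. int C * xj_minus_1 r j w) \<longleftrightarrow> integral_cond r M j C"
proof -
  define g where "g v = real C / 2 powr (real r - 2) * Sf r M j v" for v
  have ic: "integral_cond r M j C \<longleftrightarrow> (\<forall>v\<in>vecs r. g v \<in> \<int>)"
    unfolding integral_cond_def g_def Sf_def by simp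
  have Mi: "\<And>i. i < length M \<Longrightarrow> M ! i \<in> vecs r" using M by simp
  have geq: "\<And>w. w \<in> vecs r \<Longrightarrow> Lr M g w = real C * (delta (unitv r j) w - delta (zerov r) w)"
    unfolding g_def using g_eq[OF M sp _ j] by blast
  show ?thesis
  proof
    assume "in_RG_ideal r M (\<lambda>w. int C * xj_minus_1 r j w)"
    then obtain f where f: "\<forall>w\<in>vecs r. int C * xj_minus_1 r j w = gr_mult r f (relel r M) w"
      unfolding in_RG_ideal_def by blast
    define h where "h w = real_of_int (f w) - g w" for w
    have "Lr M h w = 0" if w: "w \<in> vecs r" for w
    proof -
      have "Lr M h w = Lr M (\<lambda>v. real_of_int (f v)) w - Lr M g w"
        unfolding h_def by (rule Lr_diff)
      also have "Lr M (\<lambda>v. real_of_int (f v)) w = real_of_int (gr_mult r f (relel r M) w)"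
        unfolding gr_mult_eq[OF M w] Lr_def by simp
      also have "\<dots> = real_of_int (int C * xj_minus_1 r j w)" using f w by simp
      finally show ?thesis using geq[OF w] by (simp add: xj_minus_1_def)
    qed
    then have "\<forall>w\<in>vecs r. h w = h (zerov r)" using harmonic[OF M sp] by blast
    moreover have "g (zerov r) = 0" unfolding g_def by (simp add: Sf_zero)
    ultimately have "\<forall>v\<in>vecs r. g v = real_of_int (f v - f (zerov r))"
      unfolding h_def by auto
    then have "\<forall>v\<in>vecs r. g v \<in> \<int>" by simp
    then show "integral_cond r M j C" unfolding ic .
  next
    assume "integral_cond r M j C"
    then have gi: "\<forall>v\<in>vecs r. g v \<in> \<int>" using ic by blast
    define f where "f v = \<lfloor>g v\<rfloor>" for v
    have fg: "\<And>v. v \<in> vecs r \<Longrightarrow> real_of_int (f v) = g v" unfolding f_def using gi Ints_floor by blast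
    have "int C * xj_minus_1 r j w = gr_mult r f (relel r M) w" if w: "w \<in> vecs r" for w
    proof -
      have "real_of_int (gr_mult r f (relel r M) w) = Lr M g w"
        unfolding gr_mult_eq[OF M w] Lr_def using fg w Mi vadd_in by simp
      also have "\<dots> = real_of_int (int C * xj_minus_1 r j w)"
        using geq[OF w] by (simp add: xj_minus_1_def)
      finally show ?thesis by linarith
    qed
    then show "in_RG_ideal r M (\<lambda>w. int C * xj_minus_1 r j w)"
      unfolding in_RG_ideal_def by blast
  qed
qed

lemma exists_C:
  assumes M: "\<forall>v\<in>set M. v \<in> vecs r" and sp: "f2span r M = vecs r"
    and j: "1 \<le> j" "j \<le> r"
  shows "\<exists>C>0. integral_cond r M j C"
proof -
  define U where "U = {u\<in>vecs r. u ! (j - 1)}"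
  have fU: "finite U" unfolding U_def by simp
  have lp: "\<And>u. u \<in> U \<Longrightarrow> lam M u > 0"
  proof -
    fix u assume u: "u \<in> U"
    have "u \<noteq> zerov r" using u j unfolding U_def zerov_def by auto
    then show "lam M u > 0" using lam_pos[OF M sp] u unfolding U_def by blast
  qed
  have li: "real (nat \<lfloor>lam M u\<rfloor>) = lam M u" if "u \<in> U" for u
  proof -
    have a: "real_of_int \<lfloor>lam M u\<rfloor> = lam M u" by (rule Ints_floor[OF lam_Ints])
    have b: "0 \<le> \<lfloor>lam M u\<rfloor>" using lp[OF that] by simp
    show ?thesis using a of_nat_nat[OF b] by (metis of_int_of_nat_eq)
  qed
  define C where "C = 2 ^ r * (\<Prod>u\<in>U. nat \<lfloor>lam M u\<rfloor>)"
  have "\<forall>u\<in>U. nat \<lfloor>lam M u\<rfloor> > 0"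
    using li lp by (metis of_nat_0_less_iff)
  then have Cpos: "C > 0" unfolding C_def using fU by (simp add: prod_pos)
  have Creal: "real C = 2 ^ r * (\<Prod>u\<in>U. lam M u)"
    unfolding C_def using li by simp
  have "integral_cond r M j C"
    unfolding integral_cond_def
  proof
    fix v assume v: "v \<in> vecs r"
    define Uv where "Uv = {u\<in>vecs r. dot u v \<and> u ! (j - 1)}"
    have sub: "Uv \<subseteq> U" unfolding Uv_def U_def by auto
    have "real C / 2 powr (real r - 2) = 4 * (\<Prod>u\<in>U. lam M u)"
      unfolding Creal powr_r2 by simp
    then have "real C / 2 powr (real r - 2) * (\<Sum>u\<in>Uv. 1 / lam M u)
       = 4 * (\<Sum>u\<in>Uv. (\<Prod>u\<in>U. lam M u) / lam M u)"
      by (simp add: sum_distrib_left)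
    also have "\<dots> = 4 * (\<Sum>u\<in>Uv. (\<Prod>x\<in>U - {u}. lam M x))"
    proof -
      have "(\<Prod>u\<in>U. lam M u) / lam M u = (\<Prod>x\<in>U - {u}. lam M x)" if "u \<in> Uv" for u
      proof -
        have u: "u \<in> U" using that sub by blast
        have "(\<Prod>u\<in>U. lam M u) = lam M u * (\<Prod>x\<in>U - {u}. lam M x)"
          using prod.remove[OF fU u] .
        then show ?thesis using lp[OF u] by simp
      qed
      then show ?thesis by simp
    qed
    also have "\<dots> \<in> \<int>" using lam_Ints by (intro Ints_mult Ints_sum Ints_prod) auto
    finally show "real C / 2 powr (real r - 2) * (\<Sum>u\<in>{u\<in>vecs r. dot u v \<and> u ! (j - 1)}. 1 / lam M u) \<in> \<int>"
      unfolding Uv_def .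
  qed
  then show ?thesis using Cpos by blast
qed

theorem mainTheorem8:
  fixes r j :: nat and M :: "bool list list"
  assumes "r \<ge> 1"
    and "\<forall>v\<in>set M. v \<in> vecs r \<and> v \<noteq> zerov r"
    and "f2span r M = vecs r"
    and "1 \<le> j" and "j \<le> r"
  shows "(\<exists>C>0. integral_cond r M j C) \<and>
         RG_add_order r M (xj_minus_1 r j) = (LEAST C::nat. C > 0 \<and> integral_cond r M j C)"
proof
  have M: "\<forall>v\<in>set M. v \<in> vecs r" using assms(2) by blast
  show "\<exists>C>0. integral_cond r M j C" using exists_C[OF M assms(3-5)] .
  show "RG_add_order r M (xj_minus_1 r j) = (LEAST C::nat. C > 0 \<and> integral_cond r M j C)"
    unfolding RG_add_order_def using equiv[OF M assms(3-5)] by simp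
qed

end
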